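(* Model $\mathbb H^2$ as the Poincaré upper half-plane $\{(u,v)\in\mathbb R^2: v>0\}$ with metric $ds^2=(du^2+dv^2)/v^2$, and consider $\mathbb H^2\times\mathbb R$ with the product metric. Let $A=((0,3),0)$, $B=((4,5),1)$, $C=((-4,5),1)$. Then $$\operatorname{conv}\{A,B,C\}\neq\bigcup\{[A,D]\mid D\in[B,C]\}.$$ More precisely, the point $\bigl((0,\sqrt{17}),\,1-\tfrac{\ln2}{\ln3}\bigr)$ lies in $\operatorname{conv}\{A,B,C\}$, while the only point of $\bigcup\{[A,D]\mid D\in[B,C]\}$ with first coordinate $(0,\sqrt{17})$ is $\bigl((0,\sqrt{17}),\,\tfrac{\ln17-2\ln3}{\ln41-2\ln3}\bigr)$, and these two numbers differ (the first is $<2/5$, the second $>2/5$).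
   Context: In $\mathbb H^2\times\mathbb R$ (a Cartan--Hadamard manifold), the geodesic segment $[P,Q]$ from $P=(x_0,y_0)$ to $Q=(x_1,y_1)$ is $\{(c(t),(1-t)y_0+ty_1): t\in[0,1]\}$, where $c\colon[0,1]\to\mathbb H^2$ is the constant-speed hyperbolic geodesic with $c(0)=x_0$, $c(1)=x_1$. A set $K$ is convex if $[P,Q]\subseteq K$ for all $P,Q\in K$, and $\operatorname{conv}(H)$ is the intersection of all convex sets containing $H$. The hyperbolic distance in the half-plane model is $d(a,b)=2\ln\frac{\sqrt{(a_1-b_1)^2+(a_2-b_2)^2}+\sqrt{(a_1-b_1)^2+(a_2+b_2)^2}}{2\sqrt{a_2b_2}}$. *)

theory Defs
  imports "HOL-Analysis.Analysis"
begin

type_synonym hpt = "real \<times> real"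
type_synonym pt = "hpt \<times> real"

definition H2 :: "hpt set" where
  "H2 = {p. snd p > 0}"

definition HR :: "pt set" where
  "HR = H2 \<times> UNIV"

definition hdist :: "hpt \<Rightarrow> hpt \<Rightarrow> real" where
  "hdist a b = 2 * ln ((sqrt ((fst a - fst b)^2 + (snd a - snd b)^2)
                     + sqrt ((fst a - fst b)^2 + (snd a + snd b)^2))
                     / (2 * sqrt (snd a * snd b)))"

definition hgeod :: "(real \<Rightarrow> hpt) \<Rightarrow> hpt \<Rightarrow> hpt \<Rightarrow> bool" where
  "hgeod c x0 x1 \<longleftrightarrow> c 0 = x0 \<and> c 1 = x1 \<and> (\<forall>t\<in>{0..1}. c t \<in> H2) \<and>
     (\<forall>s\<in>{0..1}. \<forall>t\<in>{0..1}. hdist (c s) (c t) = \<bar>s - t\<bar> * hdist x0 x1)"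

definition seg :: "pt \<Rightarrow> pt \<Rightarrow> pt set" where
  "seg P Q = {(c t, (1 - t) * snd P + t * snd Q) | c t.
               hgeod c (fst P) (fst Q) \<and> t \<in> {0..1}}"

definition gconvex :: "pt set \<Rightarrow> bool" where
  "gconvex K \<longleftrightarrow> (\<forall>P\<in>K. \<forall>Q\<in>K. seg P Q \<subseteq> K)"

definition gconv :: "pt set \<Rightarrow> pt set" where
  "gconv H = \<Inter>{K. K \<subseteq> HR \<and> gconvex K \<and> H \<subseteq> K}"

end

theory Submission
  imports Defs
begin


definition hq :: "hpt \<Rightarrow> hpt \<Rightarrow> real" where
  "hq a b = ((fst a - fst b)^2 + (snd a - snd b)^2) / (snd a * snd b)"

lemma cosh_hdist:
  assumes a: "snd a > 0" and b: "snd b > 0"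
  shows "cosh (hdist a b) = 1 + hq a b / 2 \<and> hdist a b \<ge> 0"
proof -
  define r1 where "r1 = sqrt ((fst a - fst b)^2 + (snd a - snd b)^2)"
  define r2 where "r2 = sqrt ((fst a - fst b)^2 + (snd a + snd b)^2)"
  define q where "q = sqrt (snd a * snd b)"
  have q0: "q > 0" using a b by (simp add: q_def)
  have qq: "q^2 = snd a * snd b" using a b by (simp add: q_def)
  have r10: "r1 \<ge> 0" by (simp add: r1_def)
  have r20: "r2 \<ge> 0" by (simp add: r2_def)
  have r11: "r1^2 = (fst a - fst b)^2 + (snd a - snd b)^2" by (simp add: r1_def)
  have r22: "r2^2 = (fst a - fst b)^2 + (snd a + snd b)^2" by (simp add: r2_def)
  have key: "r2^2 = r1^2 + 4*q^2" using r11 r22 qq by (simp add: power2_eq_square algebra_simps)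
  have r2q: "r2 \<ge> 2*q"
  proof -
    have "(2*q)^2 \<le> r2^2" using key by (simp add: power2_eq_square)
    thus ?thesis using r20 q0 by (meson power2_le_imp_le)
  qed
  define X where "X = (r1 + r2) / (2*q)"
  have X1: "X \<ge> 1" using r2q r10 q0 by (simp add: X_def field_simps)
  have hd_eq: "hdist a b = 2 * ln X" unfolding hdist_def X_def r1_def r2_def q_def by simp
  have invX: "inverse X = (r2 - r1) / (2*q)"
  proof -
    have "(r1 + r2) * (r2 - r1) = 4 * q^2" using key by (simp add: power2_eq_square algebra_simps)
    moreover have "r1 + r2 > 0" using r2q q0 r10 by linarith
    ultimately show ?thesis unfolding X_def using q0
      by (simp add: field_simps power2_eq_square)
  qed
  have "2 * ln X = ln (X^2)" using X1 by (simp add: ln_realpow)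
  hence "cosh (hdist a b) = (X^2 + inverse (X^2)) / 2"
    using hd_eq X1 by (simp add: cosh_ln_real)
  also have "\<dots> = (X^2 + (inverse X)^2) / 2" by (simp add: power_inverse)
  also have "\<dots> = 1 + r1^2 / (2 * q^2)"
    unfolding invX unfolding X_def using q0 key
    by (simp add: field_simps power2_eq_square)
  also have "\<dots> = 1 + hq a b / 2" unfolding hq_def r11[symmetric] qq[symmetric] by simp
  finally show ?thesis using X1 hd_eq by simp
qed

lemma hdist_eq:
  assumes "snd a > 0" "snd b > 0" "x \<ge> 0" "hq a b = 2 * (cosh x - 1)"
  shows "hdist a b = x"
proof -
  from cosh_hdist[OF assms(1,2)] have "cosh (hdist a b) = cosh x" "hdist a b \<ge> 0"
    using assms(4) by (auto simp: diff_divide_distrib)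
  thus ?thesis using assms(3) by (metis arcosh_cosh_real)
qed

lemma cosh_abs_real: "cosh \<bar>x::real\<bar> = cosh x"
  by (cases "x \<ge> 0") auto

lemma geo_family:
  assumes pos: "\<And>\<tau>. snd (g \<tau>) > 0" and dd: "\<And>\<sigma> \<tau>. hq (g \<sigma>) (g \<tau>) = 2 * (cosh (\<sigma> - \<tau>) - 1)"
  shows "hdist (g \<sigma>) (g \<tau>) = \<bar>\<sigma> - \<tau>\<bar>"
  by (rule hdist_eq) (auto simp: pos dd cosh_abs_real)

lemma geo_seg:
  assumes pos: "\<And>\<tau>. snd (g \<tau>) > 0" and dd: "\<And>\<sigma> \<tau>. hq (g \<sigma>) (g \<tau>) = 2 * (cosh (\<sigma> - \<tau>) - 1)"
  shows "hgeod (\<lambda>t. g (\<tau>0 + t * (\<tau>1 - \<tau>0))) (g \<tau>0) (g \<tau>1)"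
  unfolding hgeod_def
proof (intro conjI ballI)
  fix s t :: real
  have "hdist (g (\<tau>0 + s * (\<tau>1 - \<tau>0))) (g (\<tau>0 + t * (\<tau>1 - \<tau>0))) = \<bar>(s - t) * (\<tau>1 - \<tau>0)\<bar>"
    by (subst geo_family[OF pos dd]) (simp add: algebra_simps)
  also have "\<dots> = \<bar>s - t\<bar> * hdist (g \<tau>0) (g \<tau>1)"
    by (subst geo_family[OF pos dd]) (simp add: abs_mult abs_minus_commute)
  finally show "hdist (g (\<tau>0 + s * (\<tau>1 - \<tau>0))) (g (\<tau>0 + t * (\<tau>1 - \<tau>0))) = \<bar>s - t\<bar> * hdist (g \<tau>0) (g \<tau>1)" .
qed (auto simp: H2_def pos)

definition gc :: "real \<Rightarrow> real \<Rightarrow> real \<Rightarrow> hpt" where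
  "gc m R \<tau> = (m + R * sinh \<tau> / cosh \<tau>, R / cosh \<tau>)"

definition gv :: "real \<Rightarrow> hpt" where
  "gv \<tau> = (0, exp \<tau>)"

lemma gc_pos: "R > 0 \<Longrightarrow> snd (gc m R \<tau>) > 0"
  by (simp add: gc_def)

lemma gc_hd: assumes "R > 0" shows "hq (gc m R \<sigma>) (gc m R \<tau>) = 2 * (cosh (\<sigma> - \<tau>) - 1)"
proof -
  have c1: "cosh \<sigma> ^ 2 = sinh \<sigma> ^ 2 + 1" "cosh \<tau> ^ 2 = sinh \<tau> ^ 2 + 1" by (simp_all add: cosh_square_eq)
  have p: "cosh \<sigma> > 0" "cosh \<tau> > 0" by simp_all
  show ?thesis unfolding hq_def gc_def cosh_diff using assms p
    apply (simp add: field_simps)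
    using c1 by algebra
qed

lemma gv_pos: "snd (gv \<tau>) > 0" by (simp add: gv_def)

lemma gv_hd: "hq (gv \<sigma>) (gv \<tau>) = 2 * (cosh (\<sigma> - \<tau>) - 1)"
  unfolding hq_def gv_def cosh_def
  by (simp add: field_simps power2_eq_square exp_diff exp_minus mult_exp_exp)

lemma hdist_arcosh: "snd a > 0 \<Longrightarrow> snd b > 0 \<Longrightarrow> hdist a b = arcosh (1 + hq a b / 2)"
  using cosh_hdist by (metis arcosh_cosh_real)

lemma hdist_vert: "a > 0 \<Longrightarrow> b > 0 \<Longrightarrow> hdist (0, a) (0, b) = \<bar>ln a - ln b\<bar>"
  using geo_family[of gv "ln a" "ln b", OF gv_pos gv_hd] by (simp add: gv_def)

lemma seg_point:
  assumes pos: "\<And>\<tau>. snd (g \<tau>) > 0" and dd: "\<And>\<sigma> \<tau>. hq (g \<sigma>) (g \<tau>) = 2 * (cosh (\<sigma> - \<tau>) - 1)"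
    and ne: "\<tau>0 \<noteq> \<tau>1" and r: "r = (\<tau>p - \<tau>0) / (\<tau>1 - \<tau>0)" "0 \<le> r" "r \<le> 1"
    and P: "fst P = g \<tau>0" and Q: "fst Q = g \<tau>1"
  shows "(g \<tau>p, (1 - r) * snd P + r * snd Q) \<in> seg P Q"
proof -
  have h: "hgeod (\<lambda>t. g (\<tau>0 + t * (\<tau>1 - \<tau>0))) (fst P) (fst Q)"
    unfolding P Q by (rule geo_seg[OF pos dd])
  have "g \<tau>p = (\<lambda>t. g (\<tau>0 + t * (\<tau>1 - \<tau>0))) r" using ne r by simp
  thus ?thesis unfolding seg_def using h r(2,3)
    by (intro CollectI exI[of _ "\<lambda>t. g (\<tau>0 + t * (\<tau>1 - \<tau>0))"] exI[of _ r]) auto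
qed

lemma sq17: "sqrt 17 ^ 2 = (17::real)" by simp
lemma sq41: "sqrt 41 ^ 2 = (41::real)" by simp

lemma inv17: "inverse ((sqrt 17 + 1) / 4) = (sqrt 17 - 1) / (4::real)"
proof -
  have "(sqrt 17 + 1) * (sqrt 17 - 1) = (16::real)" using sq17 by (simp add: algebra_simps power2_eq_square)
  moreover have "sqrt 17 + 1 > (0::real)" by (simp add: add_pos_pos)
  ultimately show ?thesis by (simp add: field_simps)
qed

lemma inv41: "inverse ((sqrt 41 + 4) / 5) = (sqrt 41 - 4) / (5::real)"
proof -
  have "(sqrt 41 + 4) * (sqrt 41 - 4) = (25::real)" using sq41 by (simp add: algebra_simps power2_eq_square)
  moreover have "sqrt 41 + 4 > (0::real)" by (simp add: add_pos_pos)
  ultimately show ?thesis by (simp add: field_simps)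
qed

lemma pos17: "(sqrt 17 + 1) / 4 > (0::real)" by (simp add: add_pos_pos)
lemma pos41: "(sqrt 41 + 4) / 5 > (0::real)" by (simp add: add_pos_pos)

lemma sc17: "sinh (ln ((sqrt 17 + 1) / 4)) = (1/4::real)" "cosh (ln ((sqrt 17 + 1) / 4)) = sqrt 17 / (4::real)"
  by (simp_all only: sinh_ln_real[OF pos17] cosh_ln_real[OF pos17] inv17) (simp_all add: field_simps)
lemma sc41: "sinh (ln ((sqrt 41 + 4) / 5)) = (4/5::real)" "cosh (ln ((sqrt 41 + 4) / 5)) = sqrt 41 / (5::real)"
  by (simp_all only: sinh_ln_real[OF pos41] cosh_ln_real[OF pos41] inv41) (simp_all add: field_simps)

lemma pts:
  "gc 4 5 (- ln 3) = (0, 3)" "gc 4 5 (- ln 2) = (1, 4)" "gc 4 5 0 = (4, 5)"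
  "gc (-4) 5 (ln 3) = (0, 3)" "gc (-4) 5 (ln 2) = (-1, 4)" "gc (-4) 5 0 = (-4, 5)"
  "gc 0 (sqrt 17) (ln ((sqrt 17 + 1) / 4)) = (1, 4)"
  "gc 0 (sqrt 17) (- ln ((sqrt 17 + 1) / 4)) = (-1, 4)"
  "gc 0 (sqrt 17) 0 = (0, sqrt 17)"
  "gc 0 (sqrt 41) (ln ((sqrt 41 + 4) / 5)) = (4, 5)"
  "gc 0 (sqrt 41) (- ln ((sqrt 41 + 4) / 5)) = (-4, 5)"
  "gc 0 (sqrt 41) 0 = (0, sqrt 41)"
  "gv (ln 3) = (0, 3)" "gv (ln (sqrt 17)) = (0, sqrt 17)" "gv (ln (sqrt 41)) = (0, sqrt 41)"
  by (simp_all only: gc_def gv_def sc17 sc41 sinh_minus cosh_minus) (simp_all add: sinh_ln_real cosh_ln_real field_simps)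

lemma ln_lt: "ln 2 < (ln 3 :: real)" "0 < (ln 2::real)" "0 < (ln 3::real)" by simp_all

lemma in_gconv: "((0, sqrt 17), 1 - ln 2 / ln 3) \<in> gconv {((0,3),0), ((4,5),1), ((-4,5),1)}"
  unfolding gconv_def
proof (rule InterI)
  fix K assume "K \<in> {K. K \<subseteq> HR \<and> gconvex K \<and> {((0,3),0), ((4,5),1), ((-4,5),1)} \<subseteq> K}"
  hence cv: "gconvex K" and A: "((0,3),0) \<in> K" and B: "((4,5),1) \<in> K" and C: "((-4,5),1) \<in> K" by auto
  define s :: real where "s = 1 - ln 2 / ln 3"
  have s01: "0 \<le> s" "s \<le> 1" using ln_lt by (simp_all add: s_def field_simps)
  have "(gc 4 5 (- ln 2), (1 - s) * snd ((0::real,3::real),0::real) + s * snd ((4::real,5::real),1::real)) \<in> seg ((0,3),0) ((4,5),1)"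
    by (rule seg_point[of "gc 4 5" "- ln 3" 0 s "- ln 2"])
       (use ln_lt s01 in \<open>auto simp: gc_pos gc_hd pts s_def field_simps\<close>)
  hence E: "((1,4), s) \<in> K" using cv A B unfolding gconvex_def by (auto simp: pts)
  have "(gc (-4) 5 (ln 2), (1 - s) * snd ((0::real,3::real),0::real) + s * snd ((-4::real,5::real),1::real)) \<in> seg ((0,3),0) ((-4,5),1)"
    by (rule seg_point[of "gc (-4) 5" "ln 3" 0 s "ln 2"])
       (use ln_lt s01 in \<open>auto simp: gc_pos gc_hd pts s_def field_simps\<close>)
  hence F: "((-1,4), s) \<in> K" using cv A C unfolding gconvex_def by (auto simp: pts)
  define w :: real where "w = ln ((sqrt 17 + 1) / 4)"
  have w0: "w > 0" unfolding w_def
  proof (subst ln_gt_zero_iff)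
    have "sqrt 17 > (3::real)" by (rule real_less_rsqrt) simp
    thus "(sqrt 17 + 1) / 4 > (1::real)" "(sqrt 17 + 1) / 4 > (0::real)" by simp_all
  qed
  have "(gc 0 (sqrt 17) 0, (1 - 1/2) * snd ((1::real,4::real),s) + 1/2 * snd ((-1::real,4::real),s)) \<in> seg ((1,4),s) ((-1,4),s)"
    by (rule seg_point[of "gc 0 (sqrt 17)" w "-w" "1/2" 0])
       (use w0 in \<open>auto simp: gc_pos gc_hd pts w_def\<close>)
  hence "((0, sqrt 17), s) \<in> seg ((1,4),s) ((-1,4),s)" by (simp add: pts)
  thus "((0, sqrt 17), 1 - ln 2 / ln 3) \<in> K" using cv E F unfolding gconvex_def s_def by auto
qed



lemma sqrt_bounds: "sqrt 17 > (3::real)" "sqrt 41 > (3::real)" "sqrt 41 > sqrt (17::real)"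
proof -
  show a: "sqrt 17 > (3::real)" by (rule real_less_rsqrt) simp
  show b: "sqrt 41 > (3::real)" by (rule real_less_rsqrt) simp
  show "sqrt 41 > sqrt (17::real)" by simp
qed

lemma in_union: "((0, sqrt 17), (ln 17 - 2 * ln 3) / (ln 41 - 2 * ln 3))
   \<in> (\<Union>D\<in>seg ((4,5),1) ((-4,5),1). seg ((0,3),0) D)"
proof -
  define w :: real where "w = ln ((sqrt 41 + 4) / 5)"
  have w0: "w > 0" unfolding w_def
  proof (subst ln_gt_zero_iff)
    show "(sqrt 41 + 4) / 5 > (1::real)" "(sqrt 41 + 4) / 5 > (0::real)" using sqrt_bounds(2) by auto
  qed
  have "(gc 0 (sqrt 41) 0, (1 - 1/2) * snd ((4::real,5::real),1::real) + 1/2 * snd ((-4::real,5::real),1::real)) \<in> seg ((4,5),1) ((-4,5),1)"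
    by (rule seg_point[of "gc 0 (sqrt 41)" w "-w" "1/2" 0])
       (use w0 in \<open>auto simp: gc_pos gc_hd pts w_def\<close>)
  hence D: "((0, sqrt 41), 1) \<in> seg ((4,5),1) ((-4,5),1)" by (simp add: pts)
  define r where "r = (ln (sqrt 17) - ln 3) / (ln (sqrt 41) - ln 3)"
  have l: "ln 3 < ln (sqrt 17)" "ln (sqrt 17) < ln (sqrt 41)" using sqrt_bounds by simp_all
  have r01: "0 \<le> r" "r \<le> 1"
  proof -
    have "\<And>a b::real. 0 < a \<Longrightarrow> a < b \<Longrightarrow> 0 \<le> a / b \<and> a / b \<le> 1" by simp
    from this[of "ln (sqrt 17) - ln 3" "ln (sqrt 41) - ln 3"] l show "0 \<le> r" "r \<le> 1"
      unfolding r_def by linarith+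
  qed
  have "(gv (ln (sqrt 17)), (1 - r) * snd ((0::real,3::real),0::real) + r * snd ((0::real, sqrt 41),1::real)) \<in> seg ((0,3),0) ((0, sqrt 41),1)"
    apply (rule seg_point[of gv "ln 3" "ln (sqrt 41)" r "ln (sqrt 17)"])
    apply (rule gv_pos)
    apply (rule gv_hd)
    using l apply linarith
    apply (rule r_def)
    apply (rule r01(1))
    apply (rule r01(2))
    apply (simp_all add: pts)
    done
  hence "((0, sqrt 17), r) \<in> seg ((0,3),0) ((0, sqrt 41),1)" by (simp add: pts)
  moreover have "r = (ln 17 - 2 * ln 3) / (ln 41 - 2 * ln 3)"
  proof -
    have h: "\<And>x y c::real. (x/2 - c)/(y/2 - c) = (x - 2*c)/(y - 2*c)"
    proof -
      fix x y c :: real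
      have "x/2 - c = (x - 2*c)/2" "y/2 - c = (y - 2*c)/2" by simp_all
      thus "(x/2 - c)/(y/2 - c) = (x - 2*c)/(y - 2*c)" by (simp only: divide_divide_eq_left)
    qed
    show ?thesis unfolding r_def by (simp add: ln_sqrt h)
  qed
  ultimately show ?thesis using D by blast
qed

lemma alg1:
  fixes q x y S :: real
  assumes q: "q > 0" "q^2 = 17" and y: "y > 0"
    and E1: "1 + ((0 - x)^2 + (3 - y)^2) / (3 * y) / 2
       = (q/3 + inverse (q/3))/2 * (1 + ((0 - x)^2 + (q - y)^2) / (q * y) / 2) + (q/3 - inverse (q/3))/2 * S"
    and E2: "(1 + ((0 - x)^2 + (q - y)^2) / (q * y) / 2)^2 = S^2 + 1"
  shows "x = 0"
proof -
  have qz: "\<And>z. q * (q * z) = 17 * z" using q(2) by (metis mult.assoc power2_eq_square)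
  have ch: "(q/3 + inverse (q/3))/2 = 13/(3*q)" using q by (simp add: field_simps power2_eq_square)
  have sh: "(q/3 - inverse (q/3))/2 = 4/(3*q)" using q by (simp add: field_simps power2_eq_square)
  have C2: "1 + ((0 - x)^2 + (q - y)^2) / (q * y) / 2 = (x^2 + y^2 + 17) / (2*q*y)"
    using q y by (simp add: field_simps power2_eq_square)
  have E1': "(x^2 + y^2 + 9) / (6*y) = 13/(3*q) * ((x^2 + y^2 + 17) / (2*q*y)) + 4/(3*q) * S"
    using E1 unfolding ch sh C2 using y by (simp add: field_simps power2_eq_square)
  have SS: "S = (x^2 + y^2 - 17) / (2*q*y)"
  proof -
    from E1' have "4/(3*q) * S = (x^2 + y^2 + 9) / (6*y) - 13/(3*q) * ((x^2 + y^2 + 17) / (2*q*y))" by simp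
    also have "\<dots> = 4/(3*q) * ((x^2 + y^2 - 17) / (2*q*y))"
      using q y by (simp add: field_simps power2_eq_square) (simp add: qz algebra_simps)
    finally have "4/(3*q) * S = 4/(3*q) * ((x^2 + y^2 - 17) / (2*q*y))" .
    moreover have "4/(3*q) \<noteq> 0" using q by simp
    ultimately show ?thesis by (metis mult_left_cancel)
  qed
  from E2 have "((x^2 + y^2 + 17) / (2*q*y))^2 = ((x^2 + y^2 - 17) / (2*q*y))^2 + 1"
    unfolding C2 SS .
  hence "(x^2 + y^2 + 17)^2 = (x^2 + y^2 - 17)^2 + (2*q*y)^2"
    using q y by (simp add: field_simps power2_eq_square)
  hence "x * (x * 68) + y * (y * 68) = 17 * (y * (y * 4))" using q by (simp add: power2_eq_square algebra_simps qz)
  hence "x * x = 0" by simp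
  thus ?thesis by simp
qed

lemma alg2:
  fixes y c :: real
  assumes y: "y > 0" and c: "c = 1 + ((4 - 0)^2 + (5 - y)^2) / (5 * y) / 2"
    and E: "2 * c^2 - 1 = 1 + ((4 - -4)^2 + (5 - 5)^2) / (5 * 5) / 2"
  shows "y = sqrt 41"
proof -
  have c': "c = (y^2 + 41) / (10 * y)" using c y by (simp add: field_simps power2_eq_square)
  have cpos: "c \<ge> 0" using c' y by simp
  have "c^2 = (sqrt 41 / 5)^2" using E by (simp add: power_divide)
  hence "c = sqrt 41 / 5" using cpos by (simp add: power2_eq_iff_nonneg)
  hence "y^2 + 41 = 2 * sqrt 41 * y" using c' y by (simp add: field_simps)
  hence "(y - sqrt 41)^2 = 0" by (simp add: power2_diff algebra_simps)
  thus ?thesis by simp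
qed

lemma unique:
  assumes "((0, sqrt 17), z) \<in> (\<Union>D\<in>seg ((4,5),1) ((-4,5),1). seg ((0,3),0) D)"
  shows "z = (ln 17 - 2 * ln 3) / (ln 41 - 2 * ln 3)"
proof -
  obtain D where D: "D \<in> seg ((4,5),1) ((-4,5),1)" and Z: "((0, sqrt 17), z) \<in> seg ((0,3),0) D"
    using assms by blast
  from D obtain c1 t1 where D_eq: "D = (c1 t1, (1 - t1) * 1 + t1 * 1)"
    and h1: "hgeod c1 (4,5) (-4,5)" and t1: "t1 \<in> {0..1}" unfolding seg_def by auto
  from Z obtain c2 t2 where P_eq: "(0, sqrt 17) = c2 t2" and z_eq: "z = (1 - t2) * 0 + t2 * snd D"
    and h2: "hgeod c2 (0,3) (fst D)" and t2: "t2 \<in> {0..1}" unfolding seg_def by auto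
  obtain x y where xy: "c1 t1 = (x, y)" by (cases "c1 t1")
  have y0: "y > 0" using h1 t1 xy unfolding hgeod_def H2_def by force
  have fD: "fst D = (x, y)" "snd D = 1" using D_eq xy by auto
  have h2': "c2 0 = (0,3)" "c2 1 = (x,y)"
    "\<forall>s\<in>{0..1}. \<forall>t\<in>{0..1}. hdist (c2 s) (c2 t) = \<bar>s - t\<bar> * hdist (0,3) (x,y)"
    using h2 fD unfolding hgeod_def by auto
  have e1: "hdist (0,3) (0, sqrt 17) = t2 * hdist (0,3) (x,y)"
    using h2'(3)[rule_format, of 0 t2] t2 h2'(1) P_eq by simp
  have e2: "hdist (0, sqrt 17) (x,y) = (1 - t2) * hdist (0,3) (x,y)"
    using h2'(3)[rule_format, of t2 1] t2 h2'(2) P_eq by simp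
  define d1 where "d1 = hdist (0,3) (0, sqrt 17)"
  define d2 where "d2 = hdist (0, sqrt 17) (x,y)"
  define d3 where "d3 = hdist (0,3) (x,y)"
  have sum: "d1 + d2 = d3" using e1 e2 by (simp add: d1_def d2_def d3_def algebra_simps)
  have q3: "sqrt 17 / 3 > (0::real)" by simp
  have d1v: "d1 = ln (sqrt 17 / 3)"
    unfolding d1_def using sqrt_bounds(1) by (simp add: hdist_vert ln_div)
  have c1v: "cosh d1 = (sqrt 17/3 + inverse (sqrt 17/3))/2" unfolding d1v by (rule cosh_ln_real[OF q3])
  have s1v: "sinh d1 = (sqrt 17/3 - inverse (sqrt 17/3))/2" unfolding d1v by (rule sinh_ln_real[OF q3])
  have c2v: "cosh d2 = 1 + ((0 - x)^2 + (sqrt 17 - y)^2) / (sqrt 17 * y) / 2"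
    unfolding d2_def using cosh_hdist[of "(0, sqrt 17)" "(x,y)"] y0 by (simp add: hq_def)
  have c3v: "cosh d3 = 1 + ((0 - x)^2 + (3 - y)^2) / (3 * y) / 2"
    unfolding d3_def using cosh_hdist[of "(0, 3)" "(x,y)"] y0 by (simp add: hq_def)
  have "cosh d3 = cosh d1 * cosh d2 + sinh d1 * sinh d2" unfolding sum[symmetric] by (rule cosh_add)
  hence E1: "1 + ((0 - x)^2 + (3 - y)^2) / (3 * y) / 2
       = (sqrt 17/3 + inverse (sqrt 17/3))/2 * (1 + ((0 - x)^2 + (sqrt 17 - y)^2) / (sqrt 17 * y) / 2)
         + (sqrt 17/3 - inverse (sqrt 17/3))/2 * sinh d2"
    unfolding c1v s1v c2v c3v .
  have E2: "(1 + ((0 - x)^2 + (sqrt 17 - y)^2) / (sqrt 17 * y) / 2)^2 = (sinh d2)^2 + 1"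
    unfolding c2v[symmetric] by (rule cosh_square_eq)
  have x0: "x = 0" by (rule alg1[OF _ _ y0 E1 E2]) simp_all
  have h1': "c1 0 = (4,5)" "c1 1 = (-4,5)"
    "\<forall>s\<in>{0..1}. \<forall>t\<in>{0..1}. hdist (c1 s) (c1 t) = \<bar>s - t\<bar> * hdist (4,5) (-4,5)"
    using h1 unfolding hgeod_def by auto
  define L where "L = hdist (4,5) (-4,5)"
  have f1: "hdist (4,5) (0,y) = t1 * L"
    using h1'(3)[rule_format, of 0 t1] t1 h1'(1) xy x0 by (simp add: L_def)
  have f2: "hdist (0,y) (-4,5) = (1 - t1) * L"
    using h1'(3)[rule_format, of t1 1] t1 h1'(2) xy x0 by (simp add: L_def)
  have sym: "hdist (4,5) (0,y) = hdist (0,y) (-4,5)"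
    using y0 by (simp add: hdist_arcosh hq_def power2_commute mult.commute)
  have cL: "cosh L = 1 + ((4 - -4)^2 + (5 - 5)^2) / (5 * 5) / 2"
    unfolding L_def using cosh_hdist[of "(4,5)" "(-4,5)"] by (simp add: hq_def)
  have L0: "L \<noteq> 0" using cL by auto
  have "t1 = 1/2" using f1 f2 sym L0 by (simp add: algebra_simps)
  hence hL: "L = hdist (4,5) (0,y) + hdist (4,5) (0,y)" using f1 by simp
  define c where "c = cosh (hdist (4,5) (0,y))"
  have cc: "c = 1 + ((4 - 0)^2 + (5 - y)^2) / (5 * y) / 2"
    unfolding c_def using cosh_hdist[of "(4,5)" "(0,y)"] y0 by (simp add: hq_def)
  have "cosh L = c * c + (sinh (hdist (4,5) (0,y)))^2"
    unfolding hL cosh_add c_def by (simp add: power2_eq_square)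
  hence "2 * c^2 - 1 = 1 + ((4 - -4)^2 + (5 - 5)^2) / (5 * 5) / 2"
    using cL cosh_square_eq[of "hdist (4,5) (0,y)"] unfolding c_def by (simp add: power2_eq_square)
  hence yv: "y = sqrt 41" by (rule alg2[OF y0 cc])
  have "hdist (0,3) (0, sqrt 17) = ln (sqrt 17) - ln 3" using sqrt_bounds by (simp add: hdist_vert)
  moreover have "hdist (0,3) (x,y) = ln (sqrt 41) - ln 3"
  proof -
    have l41: "ln 3 < ln (sqrt 41::real)" using sqrt_bounds(2) by simp
    have "hdist (0,3) (x,y) = \<bar>ln 3 - ln (sqrt 41)\<bar>" using x0 yv by (simp add: hdist_vert)
    thus ?thesis using l41 by linarith
  qed
  ultimately have "ln (sqrt 17) - ln 3 = t2 * (ln (sqrt 41) - ln 3)" using e1 by simp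
  moreover have "ln (sqrt 41) - ln 3 > 0" using sqrt_bounds(2) by simp
  ultimately have "t2 = (ln (sqrt 17) - ln 3) / (ln (sqrt 41) - ln 3)" by (simp add: field_simps)
  also have "\<dots> = (ln 17 - 2 * ln 3) / (ln 41 - 2 * ln 3)"
  proof -
    have h: "\<And>x y c::real. (x/2 - c)/(y/2 - c) = (x - 2*c)/(y - 2*c)"
    proof -
      fix x y c :: real
      have "x/2 - c = (x - 2*c)/2" "y/2 - c = (y - 2*c)/2" by simp_all
      thus "(x/2 - c)/(y/2 - c) = (x - 2*c)/(y - 2*c)" by (simp only: divide_divide_eq_left)
    qed
    show ?thesis by (simp add: ln_sqrt h)
  qed
  finally show ?thesis using z_eq fD by simp
qed


lemma ineq1: "1 - ln 2 / ln 3 < (2::real) / 5"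
proof -
  have a: "ln (27::real) < ln 32" by (subst ln_less_cancel_iff) simp_all
  have b: "ln ((3::real)^3) = 3 * ln 3" by (rule ln_realpow[of "3::real" 3, simplified of_nat_numeral])
  have c: "ln ((2::real)^5) = 5 * ln 2" by (rule ln_realpow[of "2::real" 5, simplified of_nat_numeral])
  have "(3::real)^3 = 27" "(2::real)^5 = 32" by simp_all
  hence "3 * ln 3 < 5 * ln (2::real)" using a b c by metis
  moreover have "ln (3::real) > 0" by simp
  ultimately show ?thesis by (simp add: field_simps)
qed
lemma ineq2: "(2::real) / 5 < (ln 17 - 2 * ln 3) / (ln 41 - 2 * ln 3)"
proof -
  have a: "ln (1225449::real) < ln 1419857" by (subst ln_less_cancel_iff) simp_all
  have b1: "ln ((41::real)^2) = 2 * ln 41" by (rule ln_realpow[of "41::real" 2, simplified of_nat_numeral])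
  have b2: "ln ((3::real)^6) = 6 * ln 3" by (rule ln_realpow[of "3::real" 6, simplified of_nat_numeral])
  have b3: "ln ((41::real)^2 * 3^6) = ln ((41::real)^2) + ln (3^6)" by (rule ln_mult_pos) simp_all
  have c: "ln ((17::real)^5) = 5 * ln 17" by (rule ln_realpow[of "17::real" 5, simplified of_nat_numeral])
  have "(41::real)^2 * 3^6 = 1225449" "(17::real)^5 = 1419857" by simp_all
  hence "2 * ln 41 + 6 * ln 3 < 5 * ln (17::real)" using a b1 b2 b3 c by metis
  moreover have d: "ln (9::real) < ln 41" by (subst ln_less_cancel_iff) simp_all
  have "ln ((3::real)^2) = 2 * ln 3" by (rule ln_realpow[of "3::real" 2, simplified of_nat_numeral])
  hence "2 * ln 3 < ln (41::real)" using d by simp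
  ultimately show ?thesis by (simp add: field_simps)
qed

theorem mainTheorem11:
  fixes A B C :: pt
  assumes "A = ((0, 3), 0)" and "B = ((4, 5), 1)" and "C = ((-4, 5), 1)"
  shows "gconv {A, B, C} \<noteq> (\<Union>D\<in>seg B C. seg A D)
    \<and> ((0, sqrt 17), 1 - ln 2 / ln 3) \<in> gconv {A, B, C}
    \<and> ((0, sqrt 17), (ln 17 - 2 * ln 3) / (ln 41 - 2 * ln 3)) \<in> (\<Union>D\<in>seg B C. seg A D)
    \<and> (\<forall>z. ((0, sqrt 17), z) \<in> (\<Union>D\<in>seg B C. seg A D)
            \<longrightarrow> z = (ln 17 - 2 * ln 3) / (ln 41 - 2 * ln 3))
    \<and> 1 - ln 2 / ln 3 < (2::real) / 5
    \<and> (2::real) / 5 < (ln 17 - 2 * ln 3) / (ln 41 - 2 * ln 3)"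
proof -
  let ?U = "(\<Union>D\<in>seg ((4,5),1) ((-4,5),1). seg ((0,3),0) D)"
  have g: "((0, sqrt 17), 1 - ln 2 / ln 3) \<in> gconv {((0,3),0), ((4,5),1), ((-4,5),1)}"
    by (rule in_gconv)
  have u: "\<forall>z. ((0, sqrt 17), z) \<in> ?U \<longrightarrow> z = (ln 17 - 2 * ln 3) / (ln 41 - 2 * ln 3)"
    by (intro allI impI) (rule unique)
  have ne: "gconv {((0,3),0), ((4,5),1), ((-4,5),1)} \<noteq> ?U"
  proof
    assume eq: "gconv {((0,3),0), ((4,5),1), ((-4,5),1)} = ?U"
    have "((0, sqrt 17), 1 - ln 2 / ln 3) \<in> ?U" using g unfolding eq .
    hence "1 - ln 2 / ln 3 = (ln 17 - 2 * ln 3) / (ln 41 - 2 * ln (3::real))" by (rule unique)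
    with ineq1 ineq2 show False by linarith
  qed
  show ?thesis unfolding assms by (intro conjI ne g u in_union ineq1 ineq2)
qed

end
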